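(* There exist universal constants $c_1, c_2>0$ such that the following holds. For every real $m>1$, every integer $d\in\{2,3,\ldots\}$, every probability distribution on $\{0,1,\ldots,d\}$ with mean $m$, every $n\in\mathbb{N}\cup\{+\infty\}$ and every $x\ge 0$, the Galton–Watson process with this offspring distribution satisfies \[ \mathbb{P}(W_n\ge x)\le c_1 \exp\left\{-c_2\, \frac{m-1}{m}\, \frac{x}{d}\right\}. \]
   Context: Let $(Z_n)_{n\ge 0}$ be a Galton–Watson process with $Z_0=1$ and $Z_{n+1}=\sum_{i=1}^{Z_n}\xi_{n,i}$, where $(\xi_{n,i})_{n,i}$ are i.i.d. random variables with the given offspring distribution (the distribution of $Z_1$), whose mean is $m=\mathbb{E}[Z_1]$. Set $W_n=Z_n/m^n$ for $n\in\mathbb{N}$; $(W_n)$ is a nonnegative martingale converging almost surely (and in $L^2$) to a random variable $W_\infty\ge 0$, and $W_{+\infty}$ denotes this limit $W_\infty$. *)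

theory Defs
  imports "HOL-Probability.Probability"
begin

text \<open>Canonical probability space for a Galton-Watson process with offspring
distribution p: the sample point omega assigns to each pair (n,i) the number of
children omega (n,i) of the i-th individual of generation n; the coordinates are
i.i.d. with law p.\<close>

definition gw_space :: "nat pmf \<Rightarrow> (nat \<times> nat \<Rightarrow> nat) measure" where
  "gw_space p = PiM UNIV (\<lambda>_. measure_pmf p)"

primrec gw_Z :: "(nat \<times> nat \<Rightarrow> nat) \<Rightarrow> nat \<Rightarrow> nat" where
  "gw_Z \<omega> 0 = 1"
| "gw_Z \<omega> (Suc n) = (\<Sum>i<gw_Z \<omega> n. \<omega> (n, i))"

definition gw_mean :: "nat pmf \<Rightarrow> real" where
  "gw_mean p = measure_pmf.expectation p real"

definition gw_W :: "nat pmf \<Rightarrow> enat \<Rightarrow> (nat \<times> nat \<Rightarrow> nat) \<Rightarrow> real" where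
  "gw_W p n \<omega> = (case n of
      enat k \<Rightarrow> real (gw_Z \<omega> k) / gw_mean p ^ k
    | \<infinity> \<Rightarrow> lim (\<lambda>k. real (gw_Z \<omega> k) / gw_mean p ^ k))"

end

theory Submission
  imports Defs
begin


lemma exp_quad_bound:
  fixes v :: real assumes "\<bar>v\<bar> \<le> 1" shows "exp v \<le> 1 + v + v^2"
proof (cases "v \<ge> 0")
  case True then show ?thesis using assms exp_bound by auto
next
  case False
  define w where "w = - v"
  have w: "0 \<le> w" "w \<le> 1" using False assms by (auto simp: w_def)
  have e: "1 + w + w^2/2 \<le> exp w" using exp_lower_Taylor_quadratic[OF w(1)] .
  have "0 \<le> w^2/2" by simp
  then have pos: "0 < 1 + w + w^2/2" using w by linarith
  have "(1 - w + w^2) * (1 + w + w^2/2) = 1 + w^2/2 + w^3/2 + w^4/2"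
    by (simp add: algebra_simps power2_eq_square power3_eq_cube power4_eq_xxxx divide_simps)
  also have "\<dots> \<ge> 1" using w by simp
  finally have "1 / (1 + w + w^2/2) \<le> 1 - w + w^2" using pos
    by (simp add: divide_le_eq mult.commute)
  moreover have "exp v = 1 / exp w" by (simp add: w_def exp_minus field_simps)
  moreover have "1 / exp w \<le> 1 / (1 + w + w^2/2)" using e pos
    by (intro divide_left_mono) auto
  ultimately show ?thesis by (simp add: w_def)
qed

locale gwp =
  fixes p :: "nat pmf" and d :: nat
  assumes supp: "set_pmf p \<subseteq> {0..d}" and d2: "d \<ge> 2" and m1: "gw_mean p > 1"
begin

abbreviation "m \<equiv> gw_mean p"

definition gf :: "real \<Rightarrow> real" where
  "gf r = (\<Sum>x\<in>{0..d}. pmf p x * r ^ x)"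

lemma sum_pmf1: "(\<Sum>x\<in>{0..d}. pmf p x) = 1"
  using sum_pmf_eq_1[OF _ supp] by simp

lemma mean_sum: "m = (\<Sum>x\<in>{0..d}. pmf p x * real x)"
  unfolding gw_mean_def
  by (subst integral_measure_pmf_real[where A="{0..d}"]) (use supp in \<open>auto simp: mult.commute\<close>)

lemma m_le_d: "m \<le> real d"
proof -
  have "m \<le> (\<Sum>x\<in>{0..d}. pmf p x * real d)" unfolding mean_sum
    by (intro sum_mono mult_left_mono) auto
  also have "\<dots> = real d" using sum_pmf1 by (simp add: sum_distrib_right[symmetric])
  finally show ?thesis .
qed

lemma gf_nonneg: "0 \<le> r \<Longrightarrow> 0 \<le> gf r"
  unfolding gf_def by (intro sum_nonneg) auto

lemma gf_mono: "0 \<le> a \<Longrightarrow> a \<le> b \<Longrightarrow> gf a \<le> gf b"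
  unfolding gf_def by (intro sum_mono mult_left_mono power_mono) auto

lemma gf_bound:
  assumes t: "0 \<le> t" "real d * t \<le> 1"
  shows "gf (exp t) \<le> exp (m * t * (1 + real d * t))"
proof -
  have dpos: "real d > 0" using d2 by simp
  have cx: "convex_on UNIV exp" using convex_on_exp[of 1] by simp
  have pt: "exp t ^ x \<le> 1 + real x / real d * (exp (real d * t) - 1)" if "x \<in> {0..d}" for x
  proof -
    have th: "0 \<le> real x / real d" "real x / real d \<le> 1" using that dpos by auto
    have "exp ((1 - real x / real d) *\<^sub>R 0 + (real x / real d) *\<^sub>R (real d * t))
        \<le> (1 - real x / real d) * exp 0 + (real x / real d) * exp (real d * t)"
      by (rule convex_onD[OF cx th]) auto
    then have "exp ((1 - real x / real d) * 0 + (real x / real d) * (real d * t))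
        \<le> (1 - real x / real d) * exp 0 + (real x / real d) * exp (real d * t)" by simp
    moreover have "(1 - real x / real d) * 0 + (real x / real d) * (real d * t) = real x * t"
      using dpos by simp
    moreover have "exp t ^ x = exp (real x * t)" by (simp add: exp_of_nat_mult[symmetric])
    ultimately show ?thesis by (simp add: algebra_simps)
  qed
  have "gf (exp t) \<le> (\<Sum>x\<in>{0..d}. pmf p x * (1 + real x / real d * (exp (real d * t) - 1)))"
    unfolding gf_def by (intro sum_mono mult_left_mono pt) auto
  also have "\<dots> = (\<Sum>x\<in>{0..d}. pmf p x + (pmf p x * real x) * ((exp (real d * t) - 1) / real d))"
    by (intro sum.cong refl) (simp add: algebra_simps diff_divide_distrib)
  also have "\<dots> = (\<Sum>x\<in>{0..d}. pmf p x) + (\<Sum>x\<in>{0..d}. pmf p x * real x) * ((exp (real d * t) - 1) / real d)"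
    by (simp add: sum.distrib sum_distrib_right sum_divide_distrib)
  also have "\<dots> = 1 + m * ((exp (real d * t) - 1) / real d)" using sum_pmf1 mean_sum by simp
  also have "\<dots> \<le> 1 + m * ((real d * t + (real d * t)^2) / real d)"
    using exp_bound[of "real d * t"] t m1 dpos
    by (intro add_left_mono mult_left_mono divide_right_mono) auto
  also have "\<dots> = 1 + m * t * (1 + real d * t)" using dpos
    by (simp add: field_simps power2_eq_square)
  also have "\<dots> \<le> exp (m * t * (1 + real d * t))" by (rule exp_ge_add_one_self)
  finally show ?thesis .
qed

lemma K_bound:
  assumes t: "\<bar>t\<bar> * real d \<le> 1"
  shows "exp (- t * m) * gf (exp t) \<le> exp (t^2 * (real d)^2)"
proof -
  have m0: "0 \<le> m" using m1 by simp
  have dev: "\<bar>real x - m\<bar> \<le> real d" if "x \<in> {0..d}" for x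
    using that m_le_d m0 by auto
  have pt: "exp (t * (real x - m)) \<le> 1 + t * (real x - m) + t^2 * (real d)^2" if "x \<in> {0..d}" for x
  proof -
    have a: "\<bar>t * (real x - m)\<bar> \<le> 1"
    proof -
      have "\<bar>t * (real x - m)\<bar> = \<bar>t\<bar> * \<bar>real x - m\<bar>" by (simp add: abs_mult)
      also have "\<dots> \<le> \<bar>t\<bar> * real d" by (intro mult_left_mono dev that) auto
      finally show ?thesis using t by simp
    qed
    have "(t * (real x - m))^2 \<le> t^2 * (real d)^2"
    proof -
      have "(t * (real x - m))^2 = t^2 * \<bar>real x - m\<bar>^2" by (simp add: power_mult_distrib)
      also have "\<dots> \<le> t^2 * (real d)^2"
        by (intro mult_left_mono power_mono dev that) auto
      finally show ?thesis .
    qed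
    then show ?thesis using exp_quad_bound[OF a] by simp
  qed
  have "exp (- t * m) * gf (exp t) = (\<Sum>x\<in>{0..d}. pmf p x * exp (t * (real x - m)))"
    unfolding gf_def sum_distrib_left
    by (intro sum.cong refl) (simp add: exp_of_nat_mult[symmetric] exp_add[symmetric] algebra_simps exp_diff)
  also have "\<dots> \<le> (\<Sum>x\<in>{0..d}. pmf p x * (1 + t * (real x - m) + t^2 * (real d)^2))"
    by (intro sum_mono mult_left_mono pt) auto
  also have "\<dots> = (\<Sum>x\<in>{0..d}. pmf p x) * (1 - t * m + t^2 * (real d)^2) + t * (\<Sum>x\<in>{0..d}. pmf p x * real x)"
    by (simp add: algebra_simps sum.distrib sum_distrib_right sum_distrib_left sum_subtractf)
  also have "\<dots> = 1 + t^2 * (real d)^2" using sum_pmf1 mean_sum by simp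
  also have "\<dots> \<le> exp (t^2 * (real d)^2)" by (rule exp_ge_add_one_self)
  finally show ?thesis .
qed

definition lam :: real where "lam = (m - 1) / (4 * m * real d)"

lemma lam_pos: "0 < lam" using m1 d2 unfolding lam_def by (intro divide_pos_pos) auto

lemma d_lam: "real d * lam = (m - 1) / (4 * m)"
  using d2 m1 unfolding lam_def by (simp add: field_simps)

lemma d_lam_le: "real d * lam \<le> 1/4"
  using m1 unfolding d_lam by (simp add: field_simps)

lemma d_lam_le2: "real d * lam \<le> (m - 1) / 4"
  using m1 unfolding d_lam by (intro divide_left_mono) auto

lemma lam_le: "lam \<le> 1/8"
proof -
  have "2 * lam \<le> real d * lam" using d2 lam_pos by (intro mult_right_mono) auto
  then show ?thesis using d_lam_le by simp
qed

lemma exp_half_le2: "0 \<le> y \<Longrightarrow> y \<le> 1 \<Longrightarrow> exp (y / 2) \<le> (2::real)"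
  using real_exp_bound_lemma[of "y/2"] by simp

lemma iter_bound:
  assumes u: "0 \<le> u" "u \<le> lam / m ^ n"
  shows "0 \<le> (gf ^^ n) (exp u) \<and> (gf ^^ n) (exp u) \<le> exp 1"
proof -
  define y where "y k = 1 / m ^ (n - k)" for k
  define c where "c k = lam * y k * exp (y k / 2)" for k
  have mpos: "m > 0" using m1 by simp
  have y_pos: "0 < y k" for k unfolding y_def using mpos by simp
  have y_le1: "y k \<le> 1" for k unfolding y_def using m1 by (simp add: field_simps one_le_power)
  have c_nn: "0 \<le> c k" for k unfolding c_def using lam_pos y_pos[of k] by simp
  have dc: "real d * c k \<le> 1" for k
  proof -
    have "real d * c k = (real d * lam) * (y k * exp (y k / 2))" by (simp add: c_def)
    also have "\<dots> \<le> (1/4) * (1 * 2)"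
      using d_lam_le lam_pos y_pos[of k] y_le1[of k] exp_half_le2[of "y k"] d2
      by (intro mult_mono) (auto intro: mult_mono)
    finally show ?thesis by simp
  qed
  have step: "m * c k * (1 + real d * c k) \<le> c (Suc k)" if "Suc k \<le> n" for k
  proof -
    have ys: "y (Suc k) = m * y k" unfolding y_def using that mpos
      by (simp add: Suc_diff_Suc[symmetric] field_simps)
    define z where "z = y k"
    have z: "0 < z" "z \<le> 1" using y_pos y_le1 by (auto simp: z_def)
    have e2: "exp (z/2) \<le> 2" using exp_half_le2[of z] z by simp
    have A: "real d * lam * z * exp (z/2) \<le> (m - 1) * z / 2"
    proof -
      have q: "real d * lam * exp (z/2) \<le> (m - 1) / 4 * 2"
        using d_lam_le2 e2 lam_pos d2 m1 by (intro mult_mono) auto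
      have "real d * lam * z * exp (z/2) = (real d * lam * exp (z/2)) * z" by simp
      also have "\<dots> \<le> ((m - 1) / 4 * 2) * z"
        using q z by (intro mult_right_mono) auto
      also have "\<dots> = (m - 1) * z / 2" by simp
      finally show ?thesis .
    qed
    have B: "1 + (m - 1) * z / 2 \<le> exp ((m - 1) * z / 2)" by (rule exp_ge_add_one_self)
    have C: "exp (z/2) * (1 + real d * lam * z * exp (z/2)) \<le> exp (m * z / 2)"
    proof -
      have "exp (z/2) * (1 + real d * lam * z * exp (z/2)) \<le> exp (z/2) * exp ((m - 1) * z / 2)"
      proof (rule mult_left_mono)
        show "1 + real d * lam * z * exp (z/2) \<le> exp ((m - 1) * z / 2)" using A B by linarith
      qed simp
      also have "\<dots> = exp (m * z / 2)" by (simp add: exp_add[symmetric] algebra_simps add_divide_distrib[symmetric])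
      finally show ?thesis .
    qed
    have "m * c k * (1 + real d * c k) = (lam * m * z) * (exp (z/2) * (1 + real d * lam * z * exp (z/2)))"
      by (simp add: c_def z_def algebra_simps)
    also have "\<dots> \<le> (lam * m * z) * exp (m * z / 2)"
      using C lam_pos mpos z by (intro mult_left_mono) auto
    also have "\<dots> = c (Suc k)" by (simp add: c_def ys z_def algebra_simps)
    finally show ?thesis .
  qed
  have main: "k \<le> n \<Longrightarrow> 0 \<le> (gf ^^ k) (exp u) \<and> (gf ^^ k) (exp u) \<le> exp (c k)" for k
  proof (induction k)
    case 0
    have "u \<le> lam * y 0" using u by (simp add: y_def)
    also have "\<dots> \<le> lam * y 0 * exp (y 0 / 2)"
      using lam_pos y_pos[of 0] by (simp add: mult_le_cancel_left1 not_less del: exp_le_cancel_iff)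
    finally show ?case by (simp add: c_def)
  next
    case (Suc k)
    then have IH: "0 \<le> (gf ^^ k) (exp u)" "(gf ^^ k) (exp u) \<le> exp (c k)" by auto
    have "(gf ^^ Suc k) (exp u) = gf ((gf ^^ k) (exp u))" by simp
    also have "\<dots> \<le> gf (exp (c k))" using IH by (rule gf_mono)
    also have "\<dots> \<le> exp (m * c k * (1 + real d * c k))" using gf_bound[OF c_nn dc] .
    also have "\<dots> \<le> exp (c (Suc k))" using step[OF Suc.prems] by simp
    finally show ?case using gf_nonneg[OF IH(1)] by simp
  qed
  have "c n \<le> 1"
  proof -
    have "c n = lam * exp (1/2)" by (simp add: c_def y_def)
    also have "\<dots> \<le> (1/8) * 2" using lam_le lam_pos exp_half_le2[of 1] by (intro mult_mono) auto
    finally show ?thesis by simp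
  qed
  then have "exp (c n) \<le> exp 1" by simp
  then show ?thesis using main[of n] by linarith
qed

end


lemma prob_space_gw: "prob_space (gw_space p)"
  unfolding gw_space_def by (rule prob_space_PiM) (rule prob_space_measure_pmf)

lemma space_gw: "space (gw_space p) = UNIV"
  unfolding gw_space_def by (simp add: space_PiM)

lemma gw_Z_cong: "(\<And>j i. j < n \<Longrightarrow> \<omega> (j,i) = \<omega>' (j,i)) \<Longrightarrow> gw_Z \<omega> n = gw_Z \<omega>' n"
  by (induction n) auto

lemma meas_count_borel: "f \<in> measurable M (count_space (UNIV::'b::{countable,t2_space} set)) \<longleftrightarrow> f \<in> borel_measurable M"
  using measurable_cong_sets[OF refl sets_borel_eq_count_space, of M] by auto

lemma gw_Z_meas:
  assumes "\<And>j i. j < n \<Longrightarrow> (j,i) \<in> I"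
  shows "(\<lambda>\<omega>. gw_Z \<omega> n) \<in> measurable (PiM I (\<lambda>_. measure_pmf p)) (count_space UNIV)"
  using assms
proof (induction n)
  case 0 then show ?case by simp
next
  case (Suc n)
  have comp: "(\<lambda>\<omega>. \<omega> (n,i)) \<in> borel_measurable (PiM I (\<lambda>_. measure_pmf p))" for i
  proof -
    have "(\<lambda>\<omega>. \<omega> (n,i)) \<in> measurable (PiM I (\<lambda>_. measure_pmf p)) (measure_pmf p)"
      using Suc.prems[of n i] by (intro measurable_component_singleton) auto
    then show ?thesis by (simp add: measurable_pmf_measure2 meas_count_borel)
  qed
  have "(\<lambda>\<omega>. \<Sum>i<k. \<omega> (n,i)) \<in> measurable (PiM I (\<lambda>_. measure_pmf p)) (count_space UNIV)" for k
    unfolding meas_count_borel using comp by (intro borel_measurable_sum) auto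
  moreover have "(\<lambda>\<omega>. gw_Z \<omega> n) \<in> measurable (PiM I (\<lambda>_. measure_pmf p)) (count_space UNIV)"
    using Suc by auto
  ultimately show ?case
    by (simp only: gw_Z.simps) (rule measurable_compose_countable[where g="\<lambda>\<omega>. gw_Z \<omega> n" and f="\<lambda>k \<omega>. \<Sum>i<k. \<omega> (n,i)"])
qed

lemma gw_Z_meas': "(\<lambda>\<omega>. gw_Z \<omega> n) \<in> measurable (gw_space p) (count_space UNIV)"
  unfolding gw_space_def by (rule gw_Z_meas) auto

lemma coord_meas: "(\<lambda>\<omega>. \<omega> j) \<in> measurable (gw_space p) (measure_pmf p)"
  unfolding gw_space_def by (rule measurable_component_singleton) auto

lemma indep_coords: "prob_space.indep_vars (gw_space p) (\<lambda>_. measure_pmf p) (\<lambda>i \<omega>. \<omega> i) UNIV"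
proof -
  interpret prob_space "gw_space p" by (rule prob_space_gw)
  have "distr (gw_space p) (\<Pi>\<^sub>M i\<in>UNIV. measure_pmf p) (\<lambda>x. \<lambda>i\<in>UNIV. x i)
      = (\<Pi>\<^sub>M i\<in>UNIV. distr (gw_space p) (measure_pmf p) (\<lambda>x. x i))"
  proof -
    have "distr (gw_space p) (measure_pmf p) (\<lambda>x. x i) = measure_pmf p" for i
      unfolding gw_space_def by (rule distr_PiM_component) (auto intro: prob_space_measure_pmf)
    moreover have "(\<lambda>x::nat\<times>nat\<Rightarrow>nat. restrict x UNIV) = (\<lambda>x. x)" by (auto simp: restrict_def)
    ultimately show ?thesis by (simp add: gw_space_def)
  qed
  then show ?thesis
    using coord_meas[of _ p] by (subst indep_vars_iff_distr_eq_PiM) auto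
qed

lemma (in prob_space) indep_var_nn_integral:
  fixes X Y :: "'a \<Rightarrow> ennreal"
  assumes "indep_var borel X borel Y"
  shows "(\<integral>\<^sup>+\<omega>. X \<omega> * Y \<omega> \<partial>M) = (\<integral>\<^sup>+\<omega>. X \<omega> \<partial>M) * (\<integral>\<^sup>+\<omega>. Y \<omega> \<partial>M)"
proof -
  have **: "(\<lambda> _. borel) = case_bool borel borel"
    by (rule ext) (simp split: bool.split)
  have ind: "indep_vars (\<lambda>_. borel) (case_bool X Y) UNIV"
    using assms unfolding indep_var_def by (subst **)
  have "(\<integral>\<^sup>+\<omega>. (\<Prod>i\<in>UNIV. case_bool X Y i \<omega>) \<partial>M) = (\<Prod>i\<in>UNIV. \<integral>\<^sup>+\<omega>. case_bool X Y i \<omega> \<partial>M)"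
    by (rule indep_vars_nn_integral[OF _ ind]) auto
  then show ?thesis by (simp add: UNIV_bool mult.commute)
qed

lemma iid_prod:
  fixes f :: "nat \<Rightarrow> ennreal"
  shows "(\<integral>\<^sup>+\<omega>. (\<Prod>i<k. f (\<omega> (n,i))) \<partial>gw_space p) = (\<integral>\<^sup>+x. f x \<partial>measure_pmf p) ^ k"
proof -
  interpret prob_space "gw_space p" by (rule prob_space_gw)
  have ind0: "indep_vars (\<lambda>_. borel) (\<lambda>j \<omega>. f (\<omega> j)) UNIV"
    using indep_vars_compose2[OF indep_coords, of "\<lambda>_. f" "\<lambda>_. borel"]
    by (simp add: measurable_pmf_measure1)
  have ind: "indep_vars (\<lambda>_. borel) (\<lambda>j \<omega>. f (\<omega> j)) (Pair n ` {..<k})"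
    by (rule indep_vars_subset[OF ind0]) auto
  have "(\<integral>\<^sup>+\<omega>. (\<Prod>j\<in>Pair n ` {..<k}. f (\<omega> j)) \<partial>gw_space p) = (\<Prod>j\<in>Pair n ` {..<k}. \<integral>\<^sup>+\<omega>. f (\<omega> j) \<partial>gw_space p)"
    by (rule indep_vars_nn_integral[OF _ ind]) auto
  moreover have "(\<integral>\<^sup>+\<omega>. f (\<omega> j) \<partial>gw_space p) = (\<integral>\<^sup>+x. f x \<partial>measure_pmf p)" for j
  proof -
    have "distr (gw_space p) (measure_pmf p) (\<lambda>x. x j) = measure_pmf p"
      unfolding gw_space_def by (rule distr_PiM_component) (auto intro: prob_space_measure_pmf)
    then have "(\<integral>\<^sup>+x. f x \<partial>measure_pmf p) = (\<integral>\<^sup>+x. f x \<partial>distr (gw_space p) (measure_pmf p) (\<lambda>x. x j))" by simp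
    also have "\<dots> = (\<integral>\<^sup>+\<omega>. f (\<omega> j) \<partial>gw_space p)"
      by (rule nn_integral_distr[OF coord_meas]) (simp add: measurable_pmf_measure1)
    finally show ?thesis by simp
  qed
  moreover have "inj_on (Pair n) {..<k}" by (auto simp: inj_on_def)
  ultimately show ?thesis by (simp add: prod.reindex card_image)
qed

lemma block:
  fixes f :: "nat \<Rightarrow> ennreal"
  shows "(\<integral>\<^sup>+\<omega>. indicator {\<omega>. gw_Z \<omega> n = k} \<omega> * (\<Prod>i<k. f (\<omega> (n,i))) \<partial>gw_space p)
       = (\<integral>\<^sup>+\<omega>. indicator {\<omega>. gw_Z \<omega> n = k} \<omega> \<partial>gw_space p) * (\<integral>\<^sup>+x. f x \<partial>measure_pmf p) ^ k"
proof -
  interpret prob_space "gw_space p" by (rule prob_space_gw)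
  define A :: "(nat \<times> nat) set" where "A = {(j,i). j < n}"
  define B :: "(nat \<times> nat) set" where "B = range (Pair n)"
  define h1 where "h1 = (\<lambda>a. indicator {k} (gw_Z a n) :: ennreal)"
  define h2 where "h2 = (\<lambda>b. \<Prod>i<k. f (b (n,i)))"
  have iv: "indep_var (PiM A (\<lambda>_. measure_pmf p)) (\<lambda>\<omega>. restrict (\<lambda>i. \<omega> i) A)
                      (PiM B (\<lambda>_. measure_pmf p)) (\<lambda>\<omega>. restrict (\<lambda>i. \<omega> i) B)"
    by (rule indep_var_restrict[OF indep_coords]) (auto simp: A_def B_def)
  have m1: "h1 \<in> borel_measurable (PiM A (\<lambda>_. measure_pmf p))"
    unfolding h1_def
    by (rule measurable_compose[OF gw_Z_meas[of n A p]]) (auto simp: A_def)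
  have m2: "h2 \<in> borel_measurable (PiM B (\<lambda>_. measure_pmf p))"
    unfolding h2_def
    by (intro borel_measurable_prod_ennreal measurable_compose[OF measurable_component_singleton])
       (auto simp: B_def measurable_pmf_measure1)
  have iv2: "indep_var borel (h1 \<circ> (\<lambda>\<omega>. restrict (\<lambda>i. \<omega> i) A)) borel (h2 \<circ> (\<lambda>\<omega>. restrict (\<lambda>i. \<omega> i) B))"
    by (rule indep_var_compose[OF iv m1 m2])
  have e1: "(h1 \<circ> (\<lambda>\<omega>. restrict (\<lambda>i. \<omega> i) A)) \<omega> = indicator {\<omega>. gw_Z \<omega> n = k} \<omega>" for \<omega>
  proof -
    have "gw_Z (restrict \<omega> A) n = gw_Z \<omega> n" by (rule gw_Z_cong) (auto simp: A_def)
    then show ?thesis by (simp add: h1_def indicator_def)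
  qed
  have e2: "(h2 \<circ> (\<lambda>\<omega>. restrict (\<lambda>i. \<omega> i) B)) \<omega> = (\<Prod>i<k. f (\<omega> (n,i)))" for \<omega>
    by (simp add: h2_def B_def)
  show ?thesis
    using indep_var_nn_integral[OF iv2] unfolding e1 e2 iid_prod by simp
qed

lemma decomp_Z:
  fixes h :: "nat \<Rightarrow> ennreal"
  shows "h (gw_Z \<omega> n) = (\<Sum>k. indicator {\<omega>. gw_Z \<omega> n = k} \<omega> * h k)"
  by (subst suminf_finite[where N="{gw_Z \<omega> n}"]) (auto simp: indicator_def)

lemma Z_set_meas: "{\<omega>. gw_Z \<omega> n = k} \<in> sets (gw_space p)"
proof -
  have "(\<lambda>\<omega>. gw_Z \<omega> n) -` {k} \<inter> space (gw_space p) \<in> sets (gw_space p)"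
    by (rule measurable_sets[OF gw_Z_meas']) auto
  then show ?thesis by (simp add: space_gw vimage_def)
qed

lemma prod_meas: "(\<lambda>\<omega>. \<Prod>i<k. (f::nat\<Rightarrow>ennreal) (\<omega> (n,i))) \<in> borel_measurable (gw_space p)"
  by (intro borel_measurable_prod_ennreal measurable_compose[OF coord_meas])
     (auto simp: measurable_pmf_measure1)

lemma branch:
  fixes f g :: "nat \<Rightarrow> ennreal"
  shows "(\<integral>\<^sup>+\<omega>. g (gw_Z \<omega> n) * (\<Prod>i<gw_Z \<omega> n. f (\<omega> (n,i))) \<partial>gw_space p)
       = (\<integral>\<^sup>+\<omega>. g (gw_Z \<omega> n) * (\<integral>\<^sup>+x. f x \<partial>measure_pmf p) ^ gw_Z \<omega> n \<partial>gw_space p)"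
proof -
  let ?M = "gw_space p"
  let ?I = "\<lambda>k \<omega>. indicator {\<omega>. gw_Z \<omega> n = k} \<omega> :: ennreal"
  let ?E = "\<integral>\<^sup>+x. f x \<partial>measure_pmf p"
  have Im: "?I k \<in> borel_measurable ?M" for k using Z_set_meas by simp
  have "(\<integral>\<^sup>+\<omega>. g (gw_Z \<omega> n) * (\<Prod>i<gw_Z \<omega> n. f (\<omega> (n,i))) \<partial>?M)
      = (\<integral>\<^sup>+\<omega>. (\<Sum>k. ?I k \<omega> * (g k * (\<Prod>i<k. f (\<omega> (n,i))))) \<partial>?M)"
    by (intro nn_integral_cong) (subst suminf_finite[where N="{gw_Z _ n}"], auto simp: indicator_def)
  also have "\<dots> = (\<Sum>k. \<integral>\<^sup>+\<omega>. ?I k \<omega> * (g k * (\<Prod>i<k. f (\<omega> (n,i)))) \<partial>?M)"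
    using Im prod_meas by (intro nn_integral_suminf borel_measurable_times_ennreal borel_measurable_const)
  also have "\<dots> = (\<Sum>k. g k * (\<integral>\<^sup>+\<omega>. ?I k \<omega> * (\<Prod>i<k. f (\<omega> (n,i))) \<partial>?M))"
    using Im prod_meas by (subst nn_integral_cmult[symmetric]) (auto simp: mult.left_commute)
  also have "\<dots> = (\<Sum>k. g k * ((\<integral>\<^sup>+\<omega>. ?I k \<omega> \<partial>?M) * ?E ^ k))"
    by (simp only: block)
  also have "\<dots> = (\<Sum>k. \<integral>\<^sup>+\<omega>. ?I k \<omega> * (g k * ?E ^ k) \<partial>?M)"
    using Im by (subst nn_integral_multc) (auto simp: mult_ac)
  also have "\<dots> = (\<integral>\<^sup>+\<omega>. (\<Sum>k. ?I k \<omega> * (g k * ?E ^ k)) \<partial>?M)"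
    using Im by (intro nn_integral_suminf[symmetric] borel_measurable_times_ennreal borel_measurable_const)
  also have "\<dots> = (\<integral>\<^sup>+\<omega>. g (gw_Z \<omega> n) * ?E ^ gw_Z \<omega> n \<partial>?M)"
    by (intro nn_integral_cong) (subst suminf_finite[where N="{gw_Z _ n}"], auto simp: indicator_def)
  finally show ?thesis .
qed

definition Phi :: "nat pmf \<Rightarrow> nat \<Rightarrow> ennreal \<Rightarrow> ennreal" where
  "Phi p n s = (\<integral>\<^sup>+\<omega>. s ^ gw_Z \<omega> n \<partial>gw_space p)"

definition GG :: "nat pmf \<Rightarrow> ennreal \<Rightarrow> ennreal" where
  "GG p s = (\<integral>\<^sup>+x. s ^ x \<partial>measure_pmf p)"

lemma Phi_Suc: "Phi p (Suc n) s = Phi p n (GG p s)"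
proof -
  have "Phi p (Suc n) s = (\<integral>\<^sup>+\<omega>. 1 * (\<Prod>i<gw_Z \<omega> n. s ^ (\<omega> (n,i))) \<partial>gw_space p)"
    unfolding Phi_def by (simp add: power_sum)
  also have "\<dots> = Phi p n (GG p s)"
    using branch[where g="\<lambda>_. 1" and f="\<lambda>x. s ^ x" and n=n and p=p] by (simp add: Phi_def GG_def)
  finally show ?thesis .
qed

lemma Phi_0: "Phi p 0 s = s"
proof -
  interpret prob_space "gw_space p" by (rule prob_space_gw)
  show ?thesis by (simp add: Phi_def emeasure_space_1)
qed

lemma Phi_iter: "Phi p n s = (GG p ^^ n) s"
  by (induction n arbitrary: s) (simp_all add: Phi_0 Phi_Suc funpow_Suc_right del: funpow.simps)

lemma Phi_mono: "s \<le> t \<Longrightarrow> Phi p n s \<le> Phi p n t"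
  unfolding Phi_def by (intro nn_integral_mono power_mono) auto



context gwp begin

abbreviation "M \<equiv> gw_space p"

lemma GG_ennreal: "0 \<le> r \<Longrightarrow> GG p (ennreal r) = ennreal (gf r)"
proof -
  assume r: "0 \<le> r"
  have "GG p (ennreal r) = (\<Sum>x\<in>{0..d}. ennreal r ^ x * ennreal (pmf p x))"
    unfolding GG_def by (rule nn_integral_measure_pmf_support) (use supp in auto)
  also have "\<dots> = (\<Sum>x\<in>{0..d}. ennreal (pmf p x * r ^ x))"
    using r by (intro sum.cong refl) (simp add: ennreal_power ennreal_mult'' mult.commute)
  also have "\<dots> = ennreal (gf r)" unfolding gf_def using r by (intro sum_ennreal) auto
  finally show ?thesis .
qed

lemma GG_iter: "0 \<le> r \<Longrightarrow> 0 \<le> (gf ^^ n) r \<and> (GG p ^^ n) (ennreal r) = ennreal ((gf ^^ n) r)"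
  by (induction n) (auto simp: GG_ennreal gf_nonneg)

lemma Phi_real: "0 \<le> r \<Longrightarrow> Phi p n (ennreal r) = ennreal ((gf ^^ n) r)"
  using GG_iter[of r n] by (simp add: Phi_iter)

lemma Zreal_meas: "(\<lambda>\<omega>. real (gw_Z \<omega> k)) \<in> borel_measurable M"
  by (rule measurable_compose[OF gw_Z_meas']) simp

lemma MGF_W: "(\<integral>\<^sup>+\<omega>. ennreal (exp (lam * (real (gw_Z \<omega> k) / m ^ k))) \<partial>M) \<le> ennreal (exp 1)"
proof -
  have "(\<integral>\<^sup>+\<omega>. ennreal (exp (lam * (real (gw_Z \<omega> k) / m ^ k))) \<partial>M)
      = Phi p k (ennreal (exp (lam / m ^ k)))"
    unfolding Phi_def
    by (intro nn_integral_cong) (simp add: ennreal_power exp_of_nat_mult[symmetric] mult.commute)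
  also have "\<dots> = ennreal ((gf ^^ k) (exp (lam / m ^ k)))" by (simp add: Phi_real)
  also have "\<dots> \<le> ennreal (exp 1)"
    using iter_bound[of "lam / m ^ k" k] lam_pos m1 by simp
  finally show ?thesis .
qed

lemma MGF_D:
  assumes th: "\<bar>\<theta>\<bar> * real d \<le> 1" "\<theta>^2 * (real d)^2 \<le> lam / m ^ k"
  shows "(\<integral>\<^sup>+\<omega>. ennreal (exp (\<theta> * (real (gw_Z \<omega> (Suc k)) - m * real (gw_Z \<omega> k)))) \<partial>M) \<le> ennreal (exp 1)"
proof -
  let ?c = "ennreal (exp (- \<theta> * m))"
  have pw: "ennreal (exp (\<theta> * (real (gw_Z \<omega> (Suc k)) - m * real (gw_Z \<omega> k))))
      = ?c ^ gw_Z \<omega> k * (\<Prod>i<gw_Z \<omega> k. ennreal (exp (\<theta> * real (\<omega> (k,i)))))" for \<omega>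
  proof -
    have "exp (\<theta> * (real (gw_Z \<omega> (Suc k)) - m * real (gw_Z \<omega> k)))
        = exp (- \<theta> * m) ^ gw_Z \<omega> k * exp (\<Sum>i<gw_Z \<omega> k. \<theta> * real (\<omega> (k,i)))"
      by (simp add: exp_add[symmetric] exp_of_nat_mult[symmetric] sum_distrib_left algebra_simps)
    also have "\<dots> = exp (- \<theta> * m) ^ gw_Z \<omega> k * (\<Prod>i<gw_Z \<omega> k. exp (\<theta> * real (\<omega> (k,i))))"
      by (simp add: exp_sum)
    finally show ?thesis
      by (simp add: ennreal_mult ennreal_power prod_ennreal prod_nonneg)
  qed
  have "(\<integral>\<^sup>+\<omega>. ennreal (exp (\<theta> * (real (gw_Z \<omega> (Suc k)) - m * real (gw_Z \<omega> k)))) \<partial>M)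
      = (\<integral>\<^sup>+\<omega>. ?c ^ gw_Z \<omega> k * (\<integral>\<^sup>+x. ennreal (exp (\<theta> * real x)) \<partial>measure_pmf p) ^ gw_Z \<omega> k \<partial>M)"
    unfolding pw by (rule branch)
  also have "(\<integral>\<^sup>+x. ennreal (exp (\<theta> * real x)) \<partial>measure_pmf p) = GG p (ennreal (exp \<theta>))"
    unfolding GG_def by (intro nn_integral_cong) (simp add: ennreal_power exp_of_nat_mult[symmetric] mult.commute)
  also have "\<dots> = ennreal (gf (exp \<theta>))" by (simp add: GG_ennreal)
  also have "(\<integral>\<^sup>+\<omega>. ?c ^ gw_Z \<omega> k * ennreal (gf (exp \<theta>)) ^ gw_Z \<omega> k \<partial>M)
      = Phi p k (ennreal (exp (- \<theta> * m) * gf (exp \<theta>)))"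
    unfolding Phi_def by (intro nn_integral_cong) (simp add: ennreal_mult gf_nonneg power_mult_distrib)
  also have "\<dots> \<le> Phi p k (ennreal (exp (lam / m ^ k)))"
  proof (rule Phi_mono)
    have "exp (- \<theta> * m) * gf (exp \<theta>) \<le> exp (\<theta>^2 * (real d)^2)" by (rule K_bound[OF th(1)])
    also have "\<dots> \<le> exp (lam / m ^ k)" using th(2) by simp
    finally show "ennreal (exp (- \<theta> * m) * gf (exp \<theta>)) \<le> ennreal (exp (lam / m ^ k))" by simp
  qed
  also have "\<dots> = ennreal ((gf ^^ k) (exp (lam / m ^ k)))" by (simp add: Phi_real)
  also have "\<dots> \<le> ennreal (exp 1)"
    using iter_bound[of "lam / m ^ k" k] lam_pos m1 by simp
  finally show ?thesis .
qed

end


lemma le_ennreal_not_inf: "(A::ennreal) \<le> ennreal c \<Longrightarrow> A \<noteq> \<infinity>"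
  using ennreal_neq_top[of c] by (auto simp: top_unique)

lemma convergent_of_abs_diff:
  fixes a :: "nat \<Rightarrow> real"
  assumes "summable (\<lambda>k. \<bar>a (Suc k) - a k\<bar>)"
  shows "convergent a"
proof -
  have "summable (\<lambda>k. a (Suc k) - a k)" using assms by (rule summable_rabs_cancel)
  then have "(\<lambda>n. \<Sum>k<n. a (Suc k) - a k) \<longlonglongrightarrow> (\<Sum>k. a (Suc k) - a k)" by (rule summable_LIMSEQ)
  then have "(\<lambda>n. a n - a 0) \<longlonglongrightarrow> (\<Sum>k. a (Suc k) - a k)" by (simp add: sum_lessThan_telescope)
  then have "(\<lambda>n. (a n - a 0) + a 0) \<longlonglongrightarrow> (\<Sum>k. a (Suc k) - a k) + a 0" by (intro tendsto_add) auto
  then show ?thesis by (auto simp: convergent_def)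
qed

declare gw_Z_meas'[measurable]

context gwp begin

lemma absD:
  assumes th: "0 < \<theta>" "\<theta> * real d \<le> 1" "\<theta>^2 * (real d)^2 \<le> lam / m ^ k"
  shows "(\<integral>\<^sup>+\<omega>. ennreal \<bar>real (gw_Z \<omega> (Suc k)) - m * real (gw_Z \<omega> k)\<bar> \<partial>M) \<le> ennreal (2 * exp 1 / \<theta>)"
proof -
  note Zreal_meas[measurable]
  define D where "D \<omega> = real (gw_Z \<omega> (Suc k)) - m * real (gw_Z \<omega> k)" for \<omega>
  have Dm[measurable]: "D \<in> borel_measurable M" unfolding D_def by measurable
  have pw: "\<bar>D \<omega>\<bar> \<le> (exp (\<theta> * D \<omega>) + exp (- \<theta> * D \<omega>)) * (1 / \<theta>)" for \<omega>
  proof -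
    have "\<theta> * \<bar>D \<omega>\<bar> \<le> exp (\<theta> * \<bar>D \<omega>\<bar>)" using exp_ge_add_one_self[of "\<theta> * \<bar>D \<omega>\<bar>"] by linarith
    also have "\<dots> \<le> exp (\<theta> * D \<omega>) + exp (- \<theta> * D \<omega>)"
      by (cases "D \<omega> \<ge> 0") (auto simp: abs_if add_increasing add_increasing2)
    finally show ?thesis using th(1) by (simp add: field_simps)
  qed
  have "(\<integral>\<^sup>+\<omega>. ennreal \<bar>D \<omega>\<bar> \<partial>M) \<le> (\<integral>\<^sup>+\<omega>. (ennreal (exp (\<theta> * D \<omega>)) + ennreal (exp (- \<theta> * D \<omega>))) * ennreal (1 / \<theta>) \<partial>M)"
  proof (intro nn_integral_mono)
    fix \<omega>
    have "ennreal \<bar>D \<omega>\<bar> \<le> ennreal ((exp (\<theta> * D \<omega>) + exp (- \<theta> * D \<omega>)) * (1 / \<theta>))"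
      using pw by (rule ennreal_leI)
    also have "\<dots> = (ennreal (exp (\<theta> * D \<omega>)) + ennreal (exp (- \<theta> * D \<omega>))) * ennreal (1 / \<theta>)"
      using th(1) by (subst ennreal_mult'') (simp_all add: ennreal_plus)
    finally show "ennreal \<bar>D \<omega>\<bar> \<le> (ennreal (exp (\<theta> * D \<omega>)) + ennreal (exp (- \<theta> * D \<omega>))) * ennreal (1 / \<theta>)" .
  qed
  also have "\<dots> = ((\<integral>\<^sup>+\<omega>. ennreal (exp (\<theta> * D \<omega>)) \<partial>M) + (\<integral>\<^sup>+\<omega>. ennreal (exp (- \<theta> * D \<omega>)) \<partial>M)) * ennreal (1 / \<theta>)"
    by (subst nn_integral_multc) (auto simp: nn_integral_add)
  also have "\<dots> \<le> (ennreal (exp 1) + ennreal (exp 1)) * ennreal (1 / \<theta>)"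
  proof (intro mult_right_mono add_mono)
    show "(\<integral>\<^sup>+\<omega>. ennreal (exp (\<theta> * D \<omega>)) \<partial>M) \<le> ennreal (exp 1)"
      unfolding D_def using th by (intro MGF_D) auto
    show "(\<integral>\<^sup>+\<omega>. ennreal (exp (- \<theta> * D \<omega>)) \<partial>M) \<le> ennreal (exp 1)"
      unfolding D_def using MGF_D[of "- \<theta>" k] th by auto
  qed simp
  also have "\<dots> = ennreal (2 * exp 1 / \<theta>)" using th(1)
    by (simp add: ennreal_plus[symmetric] ennreal_mult''[symmetric] del: ennreal_plus)
  finally show ?thesis by (simp add: D_def)
qed

definition W :: "nat \<Rightarrow> (nat \<times> nat \<Rightarrow> nat) \<Rightarrow> real" where
  "W k \<omega> = real (gw_Z \<omega> k) / m ^ k"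

lemma W_meas[measurable]: "W k \<in> borel_measurable M"
  unfolding W_def using Zreal_meas by measurable

definition CC :: real where "CC = 2 * exp 1 * real d / (sqrt lam * m)"

lemma Wdiff_int: "(\<integral>\<^sup>+\<omega>. ennreal \<bar>W (Suc k) \<omega> - W k \<omega>\<bar> \<partial>M) \<le> ennreal (CC * (1 / sqrt m) ^ k)"
proof -
  have mpos: "0 < m" using m1 by simp
  have sm: "1 < sqrt m" using m1 by simp
  have lp: "0 < sqrt lam" using lam_pos by simp
  have dpos: "0 < real d" using d2 by simp
  define \<theta> where "\<theta> = sqrt lam / (real d * sqrt m ^ k)"
  have thpos: "0 < \<theta>" unfolding \<theta>_def using lp dpos sm by simp
  have smk: "1 \<le> sqrt m ^ k" using sm by (simp add: one_le_power)
  have sl1: "sqrt lam \<le> 1" using lam_le by simp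
  have c1: "\<theta> * real d \<le> 1"
  proof -
    have "\<theta> * real d = sqrt lam / sqrt m ^ k" unfolding \<theta>_def using dpos by simp
    also have "\<dots> \<le> sqrt lam" using smk lp by (simp add: divide_le_eq mult_le_cancel_left1)
    finally show ?thesis using sl1 by linarith
  qed
  have mk: "m ^ k = sqrt m ^ k * sqrt m ^ k"
    using mpos by (simp add: power_mult_distrib[symmetric])
  have c2: "\<theta>^2 * (real d)^2 = lam / m ^ k"
    unfolding \<theta>_def using dpos lam_pos mpos
    by (simp add: power_divide power_mult_distrib mk power2_eq_square)
  have "(\<integral>\<^sup>+\<omega>. ennreal \<bar>W (Suc k) \<omega> - W k \<omega>\<bar> \<partial>M)
     = (\<integral>\<^sup>+\<omega>. ennreal \<bar>real (gw_Z \<omega> (Suc k)) - m * real (gw_Z \<omega> k)\<bar> * ennreal (1 / m ^ Suc k) \<partial>M)"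
    using mpos by (intro nn_integral_cong)
      (simp add: W_def ennreal_mult''[symmetric] abs_mult[symmetric] field_simps del: ennreal_mult'')
  also have "\<dots> = (\<integral>\<^sup>+\<omega>. ennreal \<bar>real (gw_Z \<omega> (Suc k)) - m * real (gw_Z \<omega> k)\<bar> \<partial>M) * ennreal (1 / m ^ Suc k)"
    using Zreal_meas by (intro nn_integral_multc) measurable
  also have "\<dots> \<le> ennreal (2 * exp 1 / \<theta>) * ennreal (1 / m ^ Suc k)"
    by (intro mult_right_mono absD thpos c1) (auto simp: c2)
  also have "\<dots> = ennreal (2 * exp 1 / \<theta> * (1 / m ^ Suc k))"
    by (rule ennreal_mult''[symmetric]) (use mpos in simp)
  also have "2 * exp 1 / \<theta> * (1 / m ^ Suc k) = CC * (1 / sqrt m) ^ k"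
  proof -
    have alg: "2 * e / (L / (D * Q)) * (1 / (mm * (Q * Q))) = (2 * e * D / (L * mm)) * (1 / Q)"
      if "0 < L" "0 < D" "0 < Q" "0 < mm" for e L D Q mm :: real
      using that by (simp add: field_simps)
    have ms: "m ^ Suc k = m * (sqrt m ^ k * sqrt m ^ k)" using mk by simp
    have "2 * exp 1 / \<theta> * (1 / m ^ Suc k) = (2 * exp 1 * real d / (sqrt lam * m)) * (1 / sqrt m ^ k)"
      unfolding \<theta>_def ms by (rule alg) (use lp dpos mpos sm in auto)
    then show ?thesis by (simp add: CC_def power_one_over)
  qed
  finally show ?thesis .
qed

lemma conv_AE: "AE \<omega> in M. convergent (\<lambda>k. W k \<omega>)"
proof -
  have sm: "1 < sqrt m" using m1 by simp
  have CCpos: "0 \<le> CC" unfolding CC_def using m1 lam_pos by simp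
  have sg: "summable (\<lambda>k. CC * (1 / sqrt m) ^ k)"
    using sm by (intro summable_mult summable_geometric) auto
  let ?S = "\<lambda>\<omega>. \<Sum>k. ennreal \<bar>W (Suc k) \<omega> - W k \<omega>\<bar>"
  have "(\<integral>\<^sup>+\<omega>. ?S \<omega> \<partial>M) = (\<Sum>k. \<integral>\<^sup>+\<omega>. ennreal \<bar>W (Suc k) \<omega> - W k \<omega>\<bar> \<partial>M)"
    by (intro nn_integral_suminf) measurable
  also have "\<dots> \<le> (\<Sum>k. ennreal (CC * (1 / sqrt m) ^ k))"
    by (intro suminf_le Wdiff_int) auto
  also have "\<dots> = ennreal (\<Sum>k. CC * (1 / sqrt m) ^ k)"
  proof (rule suminf_ennreal2)
    show "0 \<le> CC * (1 / sqrt m) ^ k" for k using CCpos m1 by (intro mult_nonneg_nonneg zero_le_power) auto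
  qed (rule sg)
  finally have le: "(\<integral>\<^sup>+\<omega>. ?S \<omega> \<partial>M) \<le> ennreal (\<Sum>k. CC * (1 / sqrt m) ^ k)" .
  have "(\<integral>\<^sup>+\<omega>. ?S \<omega> \<partial>M) \<noteq> \<infinity>" using le by (rule le_ennreal_not_inf)
  have Sm: "?S \<in> borel_measurable M" by measurable
  then have "AE \<omega> in M. ?S \<omega> \<noteq> \<infinity>" by (rule nn_integral_noteq_infinite) fact
  then show ?thesis
  proof (rule AE_mp, intro AE_I2 impI)
    fix \<omega> assume "?S \<omega> \<noteq> \<infinity>"
    then have "summable (\<lambda>k. \<bar>W (Suc k) \<omega> - W k \<omega>\<bar>)" by (intro summable_suminf_not_top) auto
    then show "convergent (\<lambda>k. W k \<omega>)" by (rule convergent_of_abs_diff)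
  qed
qed


lemma Winf_meas: "(\<lambda>\<omega>. lim (\<lambda>k. W k \<omega>)) \<in> borel_measurable M"
  by (rule borel_measurable_lim_metric) (rule W_meas)

lemma MGF_inf: "(\<integral>\<^sup>+\<omega>. ennreal (exp (lam * lim (\<lambda>k. W k \<omega>))) \<partial>M) \<le> ennreal (exp 1)"
proof -
  have ae: "AE \<omega> in M. liminf (\<lambda>k. ennreal (exp (lam * W k \<omega>))) = ennreal (exp (lam * lim (\<lambda>k. W k \<omega>)))"
  proof (rule AE_mp[OF conv_AE], intro AE_I2 impI)
    fix \<omega> assume "convergent (\<lambda>k. W k \<omega>)"
    then have "(\<lambda>k. W k \<omega>) \<longlonglongrightarrow> lim (\<lambda>k. W k \<omega>)" by (simp add: convergent_LIMSEQ_iff)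
    then have "(\<lambda>k. ennreal (exp (lam * W k \<omega>))) \<longlonglongrightarrow> ennreal (exp (lam * lim (\<lambda>k. W k \<omega>)))"
      by (intro tendsto_ennrealI tendsto_exp tendsto_mult_left)
    then show "liminf (\<lambda>k. ennreal (exp (lam * W k \<omega>))) = ennreal (exp (lam * lim (\<lambda>k. W k \<omega>)))"
      by (intro lim_imp_Liminf) auto
  qed
  have "(\<integral>\<^sup>+\<omega>. ennreal (exp (lam * lim (\<lambda>k. W k \<omega>))) \<partial>M)
      = (\<integral>\<^sup>+\<omega>. liminf (\<lambda>k. ennreal (exp (lam * W k \<omega>))) \<partial>M)"
    by (rule nn_integral_cong_AE, rule AE_mp[OF ae], rule AE_I2) auto
  also have "\<dots> \<le> liminf (\<lambda>k. \<integral>\<^sup>+\<omega>. ennreal (exp (lam * W k \<omega>)) \<partial>M)"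
    by (intro nn_integral_liminf) measurable
  also have "\<dots> \<le> liminf (\<lambda>k. ennreal (exp 1))"
    by (intro Liminf_mono always_eventually allI) (unfold W_def, rule MGF_W)
  also have "\<dots> = ennreal (exp 1)" by (simp add: Liminf_const)
  finally show ?thesis .
qed

end

lemma markov_exp:
  fixes X :: "'a \<Rightarrow> real"
  assumes P: "prob_space N" and X: "X \<in> borel_measurable N" and l: "0 \<le> l" and c: "0 \<le> c"
    and B: "(\<integral>\<^sup>+\<omega>. ennreal (exp (l * X \<omega>)) \<partial>N) \<le> ennreal c"
  shows "measure N {\<omega> \<in> space N. x \<le> X \<omega>} \<le> c * exp (- l * x)"
proof -
  interpret prob_space N by (rule P)
  note X[measurable]
  let ?S = "{\<omega> \<in> space N. x \<le> X \<omega>}"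
  have S: "?S \<in> sets N" by measurable
  have "emeasure N ?S = (\<integral>\<^sup>+\<omega>. indicator ?S \<omega> \<partial>N)" using S by simp
  also have "\<dots> \<le> (\<integral>\<^sup>+\<omega>. ennreal (exp (l * X \<omega>)) * ennreal (exp (- l * x)) \<partial>N)"
  proof (intro nn_integral_mono)
    fix \<omega> assume "\<omega> \<in> space N"
    show "indicator ?S \<omega> \<le> ennreal (exp (l * X \<omega>)) * ennreal (exp (- l * x))"
    proof (cases "\<omega> \<in> ?S")
      case True
      then have "0 \<le> l * X \<omega> + - l * x" using l by (simp add: algebra_simps mult_left_mono)
      then have "1 \<le> exp (l * X \<omega>) * exp (- l * x)" by (simp add: exp_add[symmetric])
      then have "ennreal 1 \<le> ennreal (exp (l * X \<omega>) * exp (- l * x))" by (rule ennreal_leI)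
      then show ?thesis using True by (simp add: ennreal_mult'')
    qed simp
  qed
  also have "\<dots> = (\<integral>\<^sup>+\<omega>. ennreal (exp (l * X \<omega>)) \<partial>N) * ennreal (exp (- l * x))"
    by (intro nn_integral_multc) measurable
  also have "\<dots> \<le> ennreal c * ennreal (exp (- l * x))" using B by (rule mult_right_mono) simp
  also have "\<dots> = ennreal (c * exp (- l * x))" by (simp add: ennreal_mult'')
  finally have "ennreal (measure N ?S) \<le> ennreal (c * exp (- l * x))" by (simp add: emeasure_eq_measure)
  then show ?thesis using c by simp
qed

context gwp begin

lemma main_bound:
  assumes x: "0 \<le> x"
  shows "measure M {\<omega> \<in> space M. gw_W p n \<omega> \<ge> x} \<le> exp 1 * exp (- (1/4) * ((m - 1) / m) * (x / real d))"
proof -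
  have e: "- lam * x = - (1/4) * ((m - 1) / m) * (x / real d)"
    unfolding lam_def using m1 d2 by (simp add: field_simps)
  have P: "prob_space M" by (rule prob_space_gw)
  have "measure M {\<omega> \<in> space M. x \<le> gw_W p n \<omega>} \<le> exp 1 * exp (- lam * x)"
  proof (cases n)
    case (enat k)
    then have gk: "gw_W p n = W k" by (simp add: fun_eq_iff gw_W_def W_def)
    have B: "(\<integral>\<^sup>+\<omega>. ennreal (exp (lam * W k \<omega>)) \<partial>M) \<le> ennreal (exp 1)"
      unfolding W_def by (rule MGF_W)
    have "measure M {\<omega> \<in> space M. x \<le> W k \<omega>} \<le> exp 1 * exp (- lam * x)"
      by (rule markov_exp[OF P W_meas _ _ B]) (use lam_pos in auto)
    then show ?thesis unfolding gk .
  next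
    case infinity
    then have gk: "gw_W p n = (\<lambda>\<omega>. lim (\<lambda>k. W k \<omega>))" by (simp add: fun_eq_iff gw_W_def W_def)
    have "measure M {\<omega> \<in> space M. x \<le> lim (\<lambda>k. W k \<omega>)} \<le> exp 1 * exp (- lam * x)"
      by (rule markov_exp[OF P Winf_meas _ _ MGF_inf]) (use lam_pos in auto)
    then show ?thesis unfolding gk .
  qed
  then show ?thesis by (simp only: e)
qed

end

theorem theorem1:
  shows "\<exists>c1 c2 :: real. c1 > 0 \<and> c2 > 0 \<and>
    (\<forall>(m::real) (d::nat) (p::nat pmf). m > 1 \<longrightarrow> d \<ge> 2 \<longrightarrow>
       set_pmf p \<subseteq> {0..d} \<longrightarrow> gw_mean p = m \<longrightarrow>
       (\<forall>(n::enat) (x::real). x \<ge> 0 \<longrightarrow>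
          measure (gw_space p) {\<omega> \<in> space (gw_space p). gw_W p n \<omega> \<ge> x}
            \<le> c1 * exp (- c2 * ((m - 1) / m) * (x / real d))))"
proof -
  have main: "\<forall>(m::real) (d::nat) (p::nat pmf). m > 1 \<longrightarrow> d \<ge> 2 \<longrightarrow>
       set_pmf p \<subseteq> {0..d} \<longrightarrow> gw_mean p = m \<longrightarrow>
       (\<forall>(n::enat) (x::real). x \<ge> 0 \<longrightarrow>
          measure (gw_space p) {\<omega> \<in> space (gw_space p). gw_W p n \<omega> \<ge> x}
            \<le> exp 1 * exp (- (1/4) * ((m - 1) / m) * (x / real d)))"
  proof (intro allI impI)
    fix mm :: real and dd :: nat and pp :: "nat pmf" and n :: enat and x :: real
    assume h: "mm > 1" "dd \<ge> 2" "set_pmf pp \<subseteq> {0..dd}" "gw_mean pp = mm" "x \<ge> 0"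
    have g: "gwp pp dd" using h by unfold_locales auto
    show "measure (gw_space pp) {\<omega> \<in> space (gw_space pp). gw_W pp n \<omega> \<ge> x}
            \<le> exp 1 * exp (- (1/4) * ((mm - 1) / mm) * (x / real dd))"
      using gwp.main_bound[OF g h(5), of n] h(4) by simp
  qed
  show ?thesis
    by (rule exI[of _ "exp 1"], rule exI[of _ "1/4"]) (use main in simp)
qed

end
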